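(* Let $\zeta>1$. If a distribution $\mu$ over $\{-1,+1\}^n$ is $\zeta$-marginally stable, then for every $\alpha\in(0,1)$, every $x\in\mathbb R^n_{>0}$ and every $i\in[n]$ with $x_i\ge(2\zeta)^{1/(1-\alpha)}$, $$\frac{\partial F_{\mu,\alpha}}{\partial z_i}\Big|_{z=x}\le0,$$ where $F_{\mu,\alpha}(z)=\dfrac{g_\mu(z_1^\alpha,\dots,z_n^\alpha)^{1/\alpha}}{\prod_{j=1}^n(\mu_j(+1)z_j+\mu_j(-1))}$.
   Context: $g_\mu(z)=\sum_\sigma\mu(\sigma)\prod_{j:\sigma_j=+1}z_j$; $\mu_j$ marginal at coordinate $j$; $\Omega(\cdot)$ support; $\mu_\Lambda$ marginal on $\Lambda$; $\mu^\sigma$ conditional on $\sigma\in\Omega(\mu_\Lambda)$. $\zeta$-marginal stability: for every $i\in[n]$, every $S\subseteq\Lambda\subseteq[n]\setminus\{i\}$, and every $\sigma\in\Omega(\mu_\Lambda)$, $R_i^\sigma\le\zeta$ and $R_i^\sigma\le\zeta R_i^{\sigma_S}$, where $R_i^\sigma=\mu_i^\sigma(+1)/\mu_i^\sigma(-1)$. *)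

theory Defs
  imports "HOL-Analysis.Analysis"
begin

text \<open>A configuration \<open>\<sigma> \<in> {-1,+1}^n\<close> is encoded by the set \<open>S \<subseteq> {..<n}\<close> of
  coordinates where \<open>\<sigma>_j = +1\<close>.\<close>

definition is_distribution :: "nat \<Rightarrow> (nat set \<Rightarrow> real) \<Rightarrow> bool" where
  "is_distribution n \<mu> \<longleftrightarrow> (\<forall>S\<subseteq>{..<n}. 0 \<le> \<mu> S) \<and> (\<Sum>S\<in>Pow {..<n}. \<mu> S) = 1"

definition prob_ev :: "nat \<Rightarrow> (nat set \<Rightarrow> real) \<Rightarrow> (nat set \<Rightarrow> bool) \<Rightarrow> real" where
  "prob_ev n \<mu> P = (\<Sum>S\<in>{S. S \<subseteq> {..<n} \<and> P S}. \<mu> S)"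

definition gen_poly :: "nat \<Rightarrow> (nat set \<Rightarrow> real) \<Rightarrow> (nat \<Rightarrow> real) \<Rightarrow> real" where
  "gen_poly n \<mu> z = (\<Sum>S\<in>Pow {..<n}. \<mu> S * (\<Prod>j\<in>S. z j))"

definition marg_plus :: "nat \<Rightarrow> (nat set \<Rightarrow> real) \<Rightarrow> nat \<Rightarrow> real" where
  "marg_plus n \<mu> j = prob_ev n \<mu> (\<lambda>S. j \<in> S)"

definition marg_minus :: "nat \<Rightarrow> (nat set \<Rightarrow> real) \<Rightarrow> nat \<Rightarrow> real" where
  "marg_minus n \<mu> j = prob_ev n \<mu> (\<lambda>S. j \<notin> S)"

text \<open>A partial configuration \<open>\<sigma> \<in> {-1,+1}^\<Lambda>\<close> is encoded by \<open>T \<subseteq> \<Lambda>\<close> (its +1 coordinates).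
  \<open>\<sigma> \<in> \<Omega>(\<mu>_\<Lambda>)\<close> iff \<open>\<mu>_\<Lambda>(\<sigma>) > 0\<close>.\<close>
definition in_supp_marg :: "nat \<Rightarrow> (nat set \<Rightarrow> real) \<Rightarrow> nat set \<Rightarrow> nat set \<Rightarrow> bool" where
  "in_supp_marg n \<mu> \<Lambda> T \<longleftrightarrow> T \<subseteq> \<Lambda> \<and> prob_ev n \<mu> (\<lambda>S. S \<inter> \<Lambda> = T) > 0"

definition cond_plus :: "nat \<Rightarrow> (nat set \<Rightarrow> real) \<Rightarrow> nat \<Rightarrow> nat set \<Rightarrow> nat set \<Rightarrow> real" where
  "cond_plus n \<mu> i \<Lambda> T = prob_ev n \<mu> (\<lambda>S. i \<in> S \<and> S \<inter> \<Lambda> = T) / prob_ev n \<mu> (\<lambda>S. S \<inter> \<Lambda> = T)"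

definition cond_minus :: "nat \<Rightarrow> (nat set \<Rightarrow> real) \<Rightarrow> nat \<Rightarrow> nat set \<Rightarrow> nat set \<Rightarrow> real" where
  "cond_minus n \<mu> i \<Lambda> T = prob_ev n \<mu> (\<lambda>S. i \<notin> S \<and> S \<inter> \<Lambda> = T) / prob_ev n \<mu> (\<lambda>S. S \<inter> \<Lambda> = T)"

definition ratio_R :: "nat \<Rightarrow> (nat set \<Rightarrow> real) \<Rightarrow> nat \<Rightarrow> nat set \<Rightarrow> nat set \<Rightarrow> real" where
  "ratio_R n \<mu> i \<Lambda> T = cond_plus n \<mu> i \<Lambda> T / cond_minus n \<mu> i \<Lambda> T"

text \<open>\<open>\<zeta>\<close>-marginal stability. \<open>\<sigma>_A\<close> (restriction of \<open>\<sigma>=(\<Lambda>,T)\<close> to \<open>A\<close>) is \<open>(A, T \<inter> A)\<close>.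
  Since \<open>R_i^\<sigma>\<close> is an extended-real ratio which is \<open>+\<infinity>\<close> when \<open>\<mu>_i^\<sigma>(-1) = 0\<close>, the
  requirement \<open>R_i^\<sigma> \<le> \<zeta>\<close> (finite) includes \<open>\<mu>_i^\<sigma>(-1) > 0\<close>, stated explicitly.\<close>
definition marg_stable :: "real \<Rightarrow> nat \<Rightarrow> (nat set \<Rightarrow> real) \<Rightarrow> bool" where
  "marg_stable \<zeta> n \<mu> \<longleftrightarrow>
     (\<forall>i<n. \<forall>\<Lambda> A T. \<Lambda> \<subseteq> {..<n} - {i} \<and> A \<subseteq> \<Lambda> \<and> in_supp_marg n \<mu> \<Lambda> T \<longrightarrow>
        cond_minus n \<mu> i \<Lambda> T > 0 \<and>
        ratio_R n \<mu> i \<Lambda> T \<le> \<zeta> \<and>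
        ratio_R n \<mu> i \<Lambda> T \<le> \<zeta> * ratio_R n \<mu> i A (T \<inter> A))"

definition F_fun :: "nat \<Rightarrow> (nat set \<Rightarrow> real) \<Rightarrow> real \<Rightarrow> (nat \<Rightarrow> real) \<Rightarrow> real" where
  "F_fun n \<mu> \<alpha> z = gen_poly n \<mu> (\<lambda>j. z j powr \<alpha>) powr (1 / \<alpha>) /
      (\<Prod>j<n. marg_plus n \<mu> j * z j + marg_minus n \<mu> j)"

end

theory Submission
  imports Defs
begin

lemma gen_split:
  assumes "i < n"
  shows "gen_poly n \<mu> z = z i * (\<Sum>T\<in>Pow ({..<n} - {i}). \<mu> (insert i T) * (\<Prod>j\<in>T. z j))
           + (\<Sum>T\<in>Pow ({..<n} - {i}). \<mu> T * (\<Prod>j\<in>T. z j))"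
proof -
  let ?L = "{..<n} - {i}"
  have e: "{..<n} = insert i ?L" using assms by auto
  have inj: "inj_on (insert i) (Pow ?L)" unfolding inj_on_def by blast
  have disj: "Pow ?L \<inter> insert i ` Pow ?L = {}" by auto
  have "gen_poly n \<mu> z = (\<Sum>S\<in>Pow ?L. \<mu> S * (\<Prod>j\<in>S. z j)) + (\<Sum>S\<in>insert i ` Pow ?L. \<mu> S * (\<Prod>j\<in>S. z j))"
    unfolding gen_poly_def by (subst e, subst Pow_insert, rule sum.union_disjoint) (use disj in auto)
  also have "(\<Sum>S\<in>insert i ` Pow ?L. \<mu> S * (\<Prod>j\<in>S. z j)) = (\<Sum>T\<in>Pow ?L. \<mu> (insert i T) * (\<Prod>j\<in>insert i T. z j))"
    by (subst sum.reindex[OF inj]) simp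
  also have "\<dots> = (\<Sum>T\<in>Pow ?L. z i * (\<mu> (insert i T) * (\<Prod>j\<in>T. z j)))"
  proof (rule sum.cong[OF refl])
    fix T assume "T \<in> Pow ?L"
    then have "finite T" "i \<notin> T" by (auto intro: finite_subset)
    then show "\<mu> (insert i T) * (\<Prod>j\<in>insert i T. z j) = z i * (\<mu> (insert i T) * (\<Prod>j\<in>T. z j))"
      by simp
  qed
  finally show ?thesis by (simp add: sum_distrib_left)
qed

lemma prob_split:
  assumes "i < n"
  shows "prob_ev n \<mu> P = (\<Sum>T\<in>Pow ({..<n} - {i}). (if P (insert i T) then \<mu> (insert i T) else 0) + (if P T then \<mu> T else 0))" (is "_ = ?R")
proof -
  have "prob_ev n \<mu> P = gen_poly n (\<lambda>S. if P S then \<mu> S else 0) (\<lambda>_. 1)"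
    unfolding prob_ev_def gen_poly_def by (rule sum.mono_neutral_cong_left) auto
  also have "\<dots> = ?R" by (subst gen_split[OF assms]) (simp add: sum.distrib)
  finally show ?thesis .
qed



lemma basics:
  assumes "i < n" "is_distribution n \<mu>"
  shows "marg_plus n \<mu> i = (\<Sum>T\<in>Pow ({..<n} - {i}). \<mu> (insert i T))"
    and "marg_minus n \<mu> i = (\<Sum>T\<in>Pow ({..<n} - {i}). \<mu> T)"
    and "marg_plus n \<mu> i + marg_minus n \<mu> i = 1"
    and "marg_plus n \<mu> i \<ge> 0" "marg_minus n \<mu> i \<ge> 0"
proof -
  let ?L = "{..<n} - {i}"
  have nin: "\<And>T. T \<in> Pow ?L \<Longrightarrow> i \<notin> T" by auto
  show p: "marg_plus n \<mu> i = (\<Sum>T\<in>Pow ?L. \<mu> (insert i T))"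
    unfolding marg_plus_def by (subst prob_split[OF assms(1)], rule sum.cong) (auto dest: nin)
  show q: "marg_minus n \<mu> i = (\<Sum>T\<in>Pow ?L. \<mu> T)"
    unfolding marg_minus_def by (subst prob_split[OF assms(1)], rule sum.cong) (auto dest: nin)
  have "gen_poly n \<mu> (\<lambda>_. 1) = 1" using assms(2) unfolding gen_poly_def is_distribution_def by simp
  then show "marg_plus n \<mu> i + marg_minus n \<mu> i = 1"
    using gen_split[OF assms(1), of \<mu> "\<lambda>_. 1"] p q by simp
  have nn: "\<And>S. S \<subseteq> {..<n} \<Longrightarrow> 0 \<le> \<mu> S" using assms(2) unfolding is_distribution_def by auto
  show "marg_plus n \<mu> i \<ge> 0" unfolding marg_plus_def prob_ev_def by (rule sum_nonneg) (auto intro: nn)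
  show "marg_minus n \<mu> i \<ge> 0" unfolding marg_minus_def prob_ev_def by (rule sum_nonneg) (auto intro: nn)
qed

lemma cond_probs:
  assumes "i < n" "T0 \<subseteq> {..<n} - {i}"
  shows "prob_ev n \<mu> (\<lambda>S. S \<inter> ({..<n} - {i}) = T0) = \<mu> (insert i T0) + \<mu> T0"
    and "prob_ev n \<mu> (\<lambda>S. i \<in> S \<and> S \<inter> ({..<n} - {i}) = T0) = \<mu> (insert i T0)"
    and "prob_ev n \<mu> (\<lambda>S. i \<notin> S \<and> S \<inter> ({..<n} - {i}) = T0) = \<mu> T0"
proof -
  let ?L = "{..<n} - {i}"
  have f: "finite (Pow ?L)" by simp
  have T0: "T0 \<in> Pow ?L" using assms(2) by simp
  have k: "\<And>T. T \<in> Pow ?L \<Longrightarrow> insert i T \<inter> ?L = T \<and> T \<inter> ?L = T \<and> i \<notin> T" by auto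
  show "prob_ev n \<mu> (\<lambda>S. S \<inter> ?L = T0) = \<mu> (insert i T0) + \<mu> T0"
    apply (subst prob_split[OF assms(1)])
    apply (subst sum.cong[OF refl, where h="\<lambda>T. if T = T0 then \<mu> (insert i T) + \<mu> T else 0"])
    using k T0 by (auto simp: sum.delta[OF f])
  show "prob_ev n \<mu> (\<lambda>S. i \<in> S \<and> S \<inter> ?L = T0) = \<mu> (insert i T0)"
    apply (subst prob_split[OF assms(1)])
    apply (subst sum.cong[OF refl, where h="\<lambda>T. if T = T0 then \<mu> (insert i T) else 0"])
    using k T0 by (auto simp: sum.delta[OF f])
  show "prob_ev n \<mu> (\<lambda>S. i \<notin> S \<and> S \<inter> ?L = T0) = \<mu> T0"
    apply (subst prob_split[OF assms(1)])
    apply (subst sum.cong[OF refl, where h="\<lambda>T. if T = T0 then \<mu> T else 0"])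
    using k T0 by (auto simp: sum.delta[OF f])
qed

lemma ratio_bound:
  assumes "i < n" "is_distribution n \<mu>" "marg_stable \<zeta> n \<mu>" "T0 \<subseteq> {..<n} - {i}"
  shows "\<mu> (insert i T0) * marg_minus n \<mu> i \<le> \<zeta> * marg_plus n \<mu> i * \<mu> T0"
    and "marg_minus n \<mu> i > 0"
proof -
  let ?L = "{..<n} - {i}"
  have nn: "\<And>S. S \<subseteq> {..<n} \<Longrightarrow> 0 \<le> \<mu> S" using assms(2) unfolding is_distribution_def by auto
  have one: "prob_ev n \<mu> (\<lambda>S. S \<inter> {} = {}) = 1" using assms(2) unfolding is_distribution_def prob_ev_def
    by (simp add: Pow_def)
  have cp: "cond_plus n \<mu> i {} {} = marg_plus n \<mu> i" unfolding cond_plus_def one marg_plus_def by simp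
  have cm: "cond_minus n \<mu> i {} {} = marg_minus n \<mu> i" unfolding cond_minus_def one marg_minus_def by simp
  have s0: "in_supp_marg n \<mu> {} {}" unfolding in_supp_marg_def one by simp
  have H: "\<And>\<Lambda> A T. \<Lambda> \<subseteq> {..<n} - {i} \<Longrightarrow> A \<subseteq> \<Lambda> \<Longrightarrow> in_supp_marg n \<mu> \<Lambda> T \<Longrightarrow>
     0 < cond_minus n \<mu> i \<Lambda> T \<and> ratio_R n \<mu> i \<Lambda> T \<le> \<zeta> * ratio_R n \<mu> i A (T \<inter> A)"
    using assms(1,3) unfolding marg_stable_def by blast
  from H[OF _ _ s0] show qpos: "marg_minus n \<mu> i > 0" using cm by simp
  have r0: "ratio_R n \<mu> i {} {} = marg_plus n \<mu> i / marg_minus n \<mu> i" unfolding ratio_R_def cp cm ..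
  have a: "0 \<le> \<mu> (insert i T0)" "0 \<le> \<mu> T0" using assms(1,4) by (auto intro!: nn)
  show "\<mu> (insert i T0) * marg_minus n \<mu> i \<le> \<zeta> * marg_plus n \<mu> i * \<mu> T0"
  proof (cases "\<mu> (insert i T0) + \<mu> T0 > 0")
    case False
    then have "\<mu> (insert i T0) = 0" "\<mu> T0 = 0" using a by auto
    then show ?thesis by simp
  next
    case True
    have sup: "in_supp_marg n \<mu> ?L T0" unfolding in_supp_marg_def
      using cond_probs(1)[OF assms(1,4)] True assms(4) by simp
    have "?L \<subseteq> {..<n} - {i}" "{} \<subseteq> ?L" by auto
    with sup H have st: "cond_minus n \<mu> i ?L T0 > 0"
        "ratio_R n \<mu> i ?L T0 \<le> \<zeta> * ratio_R n \<mu> i {} (T0 \<inter> {})"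
      by blast+
    have cm2: "cond_minus n \<mu> i ?L T0 = \<mu> T0 / (\<mu> (insert i T0) + \<mu> T0)"
      unfolding cond_minus_def cond_probs[OF assms(1,4)] ..
    have cp2: "cond_plus n \<mu> i ?L T0 = \<mu> (insert i T0) / (\<mu> (insert i T0) + \<mu> T0)"
      unfolding cond_plus_def cond_probs[OF assms(1,4)] ..
    have t0: "\<mu> T0 > 0" using st(1) True cm2 by (simp add: zero_less_divide_iff)
    have "ratio_R n \<mu> i ?L T0 = \<mu> (insert i T0) / \<mu> T0"
      unfolding ratio_R_def cm2 cp2 using True t0
      by (metis (no_types) divide_divide_eq_left divide_divide_eq_right less_irrefl mult.commute nonzero_mult_div_cancel_left)
    with st(2) r0 have "\<mu> (insert i T0) / \<mu> T0 \<le> \<zeta> * (marg_plus n \<mu> i / marg_minus n \<mu> i)" by simp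
    then show ?thesis using t0 qpos by (simp add: field_simps)
  qed
qed


lemma den_pos:
  assumes "j < n" "is_distribution n \<mu>" "y > 0"
  shows "marg_plus n \<mu> j * y + marg_minus n \<mu> j > 0"
proof -
  have "marg_plus n \<mu> j + marg_minus n \<mu> j = 1" "marg_plus n \<mu> j \<ge> 0" "marg_minus n \<mu> j \<ge> 0"
    using basics[OF assms(1,2)] by auto
  then show ?thesis using assms(3)
    by (cases "marg_plus n \<mu> j > 0") (auto intro: add_pos_nonneg)
qed

theorem lemma5p3:
  fixes \<zeta> \<alpha> :: real and n i :: nat and \<mu> :: "nat set \<Rightarrow> real" and x :: "nat \<Rightarrow> real"
  assumes "\<zeta> > 1"
    and "is_distribution n \<mu>"
    and "marg_stable \<zeta> n \<mu>"
    and "0 < \<alpha>" and "\<alpha> < 1"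
    and "\<forall>j<n. x j > 0"
    and "i < n"
    and "x i \<ge> (2 * \<zeta>) powr (1 / (1 - \<alpha>))"
  shows "deriv (\<lambda>t. F_fun n \<mu> \<alpha> (x(i := t))) (x i) \<le> 0"
proof -
  define L where "L = {..<n} - {i}"
  define w where "w T = (\<Prod>j\<in>T. x j powr \<alpha>)" for T
  define A where "A = (\<Sum>T\<in>Pow L. \<mu> (insert i T) * w T)"
  define B where "B = (\<Sum>T\<in>Pow L. \<mu> T * w T)"
  define p where "p = marg_plus n \<mu> i"
  define q where "q = marg_minus n \<mu> i"
  define C where "C = (\<Prod>j\<in>L. marg_plus n \<mu> j * x j + marg_minus n \<mu> j)"
  define t0 where "t0 = x i"
  have nn: "\<And>S. S \<subseteq> {..<n} \<Longrightarrow> 0 \<le> \<mu> S" using assms(2) unfolding is_distribution_def by auto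
  have t0pos: "t0 > 0" using assms(6,7) t0_def by auto
  have wpos: "\<And>T. T \<in> Pow L \<Longrightarrow> w T > 0" unfolding w_def L_def
    using assms(6) by (auto intro!: prod_pos)
  have qpos: "q > 0" using ratio_bound(2)[OF assms(7,2,3), of "{}"] q_def by simp
  have p0: "p \<ge> 0" using basics[OF assms(7,2)] p_def by simp
  have A0: "A \<ge> 0" unfolding A_def using wpos assms(7) by (intro sum_nonneg) (auto intro!: mult_nonneg_nonneg nn simp: L_def less_imp_le)
  have key: "A * q \<le> \<zeta> * p * B"
  proof -
    have "A * q = (\<Sum>T\<in>Pow L. \<mu> (insert i T) * q * w T)" unfolding A_def sum_distrib_right
      by (simp add: algebra_simps)
    also have "\<dots> \<le> (\<Sum>T\<in>Pow L. \<zeta> * p * \<mu> T * w T)"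
      using ratio_bound(1)[OF assms(7,2,3)] wpos unfolding p_def q_def L_def
      by (intro sum_mono mult_right_mono) (auto simp: less_imp_le)
    also have "\<dots> = \<zeta> * p * B" unfolding B_def sum_distrib_left by (simp add: algebra_simps)
    finally show ?thesis .
  qed
  have Bpos: "B > 0"
  proof -
    have "q = (\<Sum>T\<in>Pow L. \<mu> T)" using basics(2)[OF assms(7,2)] q_def L_def by simp
    with qpos obtain T where T: "T \<in> Pow L" "\<mu> T > 0"
      by (metis (no_types, lifting) not_less sum_nonpos)
    have "\<mu> T * w T \<le> B" unfolding B_def
      using wpos by (intro member_le_sum T) (auto intro!: mult_nonneg_nonneg nn simp: L_def less_imp_le)
    moreover have "\<mu> T * w T > 0" using T wpos by simp
    ultimately show ?thesis by simp
  qed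
  have Cpos: "C > 0" unfolding C_def L_def using assms(6) by (intro prod_pos den_pos[OF _ assms(2)]) auto
  have g: "gen_poly n \<mu> (\<lambda>j. (x(i:=t)) j powr \<alpha>) = t powr \<alpha> * A + B" for t
  proof -
    have *: "prod (\<lambda>j. (x(i:=t)) j powr \<alpha>) T = w T" if "T \<in> Pow L" for T
      unfolding w_def using that L_def by (intro prod.cong) auto
    have s1: "(\<Sum>T\<in>Pow L. \<mu> (insert i T) * prod (\<lambda>j. (x(i:=t)) j powr \<alpha>) T) = A"
      unfolding A_def by (intro sum.cong refl) (metis *)
    have s2: "(\<Sum>T\<in>Pow L. \<mu> T * prod (\<lambda>j. (x(i:=t)) j powr \<alpha>) T) = B"
      unfolding B_def by (intro sum.cong refl) (metis *)
    show ?thesis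
      unfolding gen_split[OF assms(7)] L_def[symmetric] s1 s2 by simp
  qed
  have d: "(\<Prod>j<n. marg_plus n \<mu> j * (x(i:=t)) j + marg_minus n \<mu> j) = (p * t + q) * C" for t
  proof -
    have e: "{..<n} = insert i L" using assms(7) L_def by auto
    have cc: "(\<Prod>j\<in>L. marg_plus n \<mu> j * (x(i:=t)) j + marg_minus n \<mu> j) = C"
      unfolding C_def L_def by (intro prod.cong) auto
    have fl: "finite L" "i \<notin> L" unfolding L_def by auto
    show ?thesis unfolding e p_def q_def prod.insert[OF fl] cc by simp
  qed
  have F: "(\<lambda>t. F_fun n \<mu> \<alpha> (x(i := t))) = (\<lambda>t. (t powr \<alpha> * A + B) powr (1 / \<alpha>) / ((p * t + q) * C))"
    unfolding F_fun_def g d ..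
  define u where "u = t0 powr \<alpha> * A + B"
  have upos: "u > 0" unfolding u_def using A0 Bpos by (simp add: add_nonneg_pos)
  have d1: "((\<lambda>t. t powr \<alpha> * A + B) has_real_derivative (\<alpha> * t0 powr (\<alpha> - 1)) * A) (at t0)"
    using has_real_derivative_powr[OF t0pos, of \<alpha>] t0pos by (intro derivative_eq_intros) auto
  have d2: "((\<lambda>t. (t powr \<alpha> * A + B) powr (1 / \<alpha>)) has_real_derivative
      (1 / \<alpha>) * u powr (1 / \<alpha> - of_nat 1) * ((\<alpha> * t0 powr (\<alpha> - 1)) * A)) (at t0)"
    using DERIV_fun_powr[OF d1, of "1/\<alpha>"] upos unfolding u_def by simp
  have d3: "((\<lambda>t. (p * t + q) * C) has_real_derivative p * C) (at t0)"
    by (intro derivative_eq_intros) auto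
  define den where "den = (p * t0 + q) * C"
  have denpos: "den > 0" unfolding den_def using p0 t0pos qpos Cpos
    by (intro mult_pos_pos add_nonneg_pos mult_nonneg_nonneg) auto
  have d4: "((\<lambda>t. (t powr \<alpha> * A + B) powr (1 / \<alpha>) / ((p * t + q) * C)) has_real_derivative
     ((1 / \<alpha>) * u powr (1 / \<alpha> - of_nat 1) * ((\<alpha> * t0 powr (\<alpha> - 1)) * A) * den - u powr (1/\<alpha>) * (p * C)) / (den * den)) (at t0)"
  proof -
    have "(p * t0 + q) * C \<noteq> 0" using denpos den_def by (metis less_irrefl)
    from DERIV_divide[OF d2 d3 this] show ?thesis unfolding den_def u_def .
  qed
  define U1 where "U1 = u powr (1 / \<alpha> - 1)"
  define s where "s = t0 powr (\<alpha> - 1)"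
  have U: "u powr (1/\<alpha>) = U1 * u" unfolding U1_def using upos
    by (simp add: powr_diff)
  have st: "s * t0 = t0 powr \<alpha>" unfolding s_def using t0pos
    using powr_add[of t0 "\<alpha> - 1" 1] t0pos by simp
  have num: "(1 / \<alpha>) * u powr (1 / \<alpha> - of_nat 1) * ((\<alpha> * t0 powr (\<alpha> - 1)) * A) * den - u powr (1/\<alpha>) * (p * C)
      = U1 * C * (A * q * s - B * p)"
  proof -
    have e1: "u powr (1 / \<alpha> - of_nat 1) = U1" by (simp add: U1_def)
    have uu: "u = s * t0 * A + B" unfolding u_def st ..
    have aa: "(1 / \<alpha>) * \<alpha> = 1" using assms(4) by simp
    have "(1 / \<alpha>) * u powr (1 / \<alpha> - of_nat 1) * ((\<alpha> * t0 powr (\<alpha> - 1)) * A) * den - u powr (1/\<alpha>) * (p * C)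
       = ((1 / \<alpha>) * \<alpha>) * U1 * s * A * ((p * t0 + q) * C) - U1 * u * (p * C)"
      unfolding e1 U s_def[symmetric] den_def by (simp only: mult.assoc mult.left_commute)
    also have "\<dots> = U1 * s * A * ((p * t0 + q) * C) - U1 * (s * t0 * A + B) * (p * C)"
      unfolding aa uu by simp
    also have "\<dots> = U1 * C * (A * q * s - B * p)" by (simp add: algebra_simps)
    finally show ?thesis .
  qed
  have big: "t0 powr (1 - \<alpha>) \<ge> 2 * \<zeta>"
  proof -
    have "((2 * \<zeta>) powr (1 / (1 - \<alpha>))) powr (1 - \<alpha>) \<le> t0 powr (1 - \<alpha>)"
      using assms(5,8) t0_def by (intro powr_mono2) auto
    moreover have "((2 * \<zeta>) powr (1 / (1 - \<alpha>))) powr (1 - \<alpha>) = 2 * \<zeta>"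
      using assms(1,5) by (simp add: powr_powr)
    ultimately show ?thesis by simp
  qed
  have s_eq: "s = 1 / t0 powr (1 - \<alpha>)" unfolding s_def using t0pos
    by (simp add: powr_minus_divide[symmetric] powr_minus)
  have "A * q * s \<le> B * p"
  proof -
    have pos: "t0 powr (1 - \<alpha>) > 0" using t0pos by simp
    have "A * q * s = A * q / t0 powr (1 - \<alpha>)" unfolding s_eq by simp
    also have "\<dots> \<le> \<zeta> * p * B / t0 powr (1 - \<alpha>)" using key pos by (simp add: divide_right_mono)
    also have "\<dots> \<le> B * p"
    proof -
      have "\<zeta> * p * B / t0 powr (1 - \<alpha>) \<le> \<zeta> * p * B / \<zeta>"
        using big p0 Bpos assms(1) pos by (intro divide_left_mono) auto
      also have "\<dots> = B * p" using assms(1) by simp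
      finally show ?thesis .
    qed
    finally show ?thesis .
  qed
  then have "U1 * C * (A * q * s - B * p) \<le> 0" unfolding U1_def using upos Cpos
    by (intro mult_nonneg_nonpos) auto
  then show ?thesis unfolding F t0_def[symmetric] using DERIV_imp_deriv[OF d4] num denpos
    by (simp add: divide_nonpos_pos)
qed

end
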